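(* Let $A, C, D$ be binary random variables, with $A$ taking values $a,\overline{a}$, $C$ taking values $c,\overline{c}$, $D$ taking values $d,\overline{d}$, and let $Y$ be a (discrete or continuous) real random variable with finite expectation. Suppose the joint distribution factorizes as \[ p(A,C,D,Y)=p(C)\,p(D\mid C)\,p(A\mid C)\,p(Y\mid A,C) \] (i.e. $C$ is a common cause of $A$ and $Y$, $A$ causes $Y$, and $D$ is a proxy of $C$, so that $D$ is conditionally independent of $(A,Y)$ given $C$). Assume that $C$ and $D$ are dependent, and that every event $\{A=x, C=y, D=z\}$ has positive probability. If $E[Y\mid A,D]$ is monotone in $D$, then $E[Y\mid A,C]$ is monotone in $C$.
   Context: $E[Y\mid A,D]$ is called nondecreasing in $D$ if $E[Y\mid a,d]\ge E[Y\mid a,\overline{d}]$ and $E[Y\mid \overline{a},d]\ge E[Y\mid \overline{a},\overline{d}]$; nonincreasing in $D$ if both inequalities are reversed ($\le$); and monotone in $D$ if it is nondecreasing or nonincreasing in $D$. The same definitions apply with $C$ (values $c,\overline{c}$) in place of $D$. *)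

theory Defs
  imports "HOL-Probability.Probability"
begin

text \<open>Binary variables are modelled as bool-valued random variables; the values
  a, c, d correspond to True and abar, cbar, dbar to False.\<close>

definition cond_exp_event :: "'w measure \<Rightarrow> ('w \<Rightarrow> real) \<Rightarrow> 'w set \<Rightarrow> real" where
  "cond_exp_event M Y S = (\<integral>w. indicator S w * Y w \<partial>M) / measure M S"

definition cond_exp2 :: "'w measure \<Rightarrow> ('w \<Rightarrow> real) \<Rightarrow> ('w \<Rightarrow> bool) \<Rightarrow> ('w \<Rightarrow> bool)
    \<Rightarrow> bool \<Rightarrow> bool \<Rightarrow> real" where
  "cond_exp2 M Y X Z x z = cond_exp_event M Y {w \<in> space M. X w = x \<and> Z w = z}"

definition nondecreasing_in2 :: "(bool \<Rightarrow> bool \<Rightarrow> real) \<Rightarrow> bool" where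
  "nondecreasing_in2 g \<longleftrightarrow> g True True \<ge> g True False \<and> g False True \<ge> g False False"

definition nonincreasing_in2 :: "(bool \<Rightarrow> bool \<Rightarrow> real) \<Rightarrow> bool" where
  "nonincreasing_in2 g \<longleftrightarrow> g True True \<le> g True False \<and> g False True \<le> g False False"

definition monotone_in2 :: "(bool \<Rightarrow> bool \<Rightarrow> real) \<Rightarrow> bool" where
  "monotone_in2 g \<longleftrightarrow> nondecreasing_in2 g \<or> nonincreasing_in2 g"

end

theory Submission
  imports Defs
begin

lemma key:
  fixes M :: "'w measure" and Y :: "'w \<Rightarrow> real"
  assumes fm: "finite_measure M" and Ym[measurable]: "Y \<in> borel_measurable M"
    and S1[measurable]: "S1 \<in> sets M" and S2[measurable]: "S2 \<in> sets M" and c1: "c1 \<ge> 0" and c2: "c2 \<ge> 0"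
    and eq: "\<And>B. B \<in> sets borel \<Longrightarrow> measure M {w\<in>S1. Y w \<in> B} * c1 = measure M {w\<in>S2. Y w \<in> B} * c2"
  shows "(\<integral>w. indicator S1 w * Y w \<partial>M) * c1 = (\<integral>w. indicator S2 w * Y w \<partial>M) * c2"
proof -
  interpret finite_measure M by (rule fm)
  define N where "N S c = distr (density M (\<lambda>w. ennreal (c * indicator S w))) borel Y" for S c
  have em: "emeasure (N S c) B = ennreal (measure M {w\<in>S. Y w \<in> B} * c)"
    if "S \<in> sets M" "B \<in> sets borel" "c \<ge> 0" for S B c
  proof -
    have sub: "S \<subseteq> space M" using that sets.sets_into_space by blast
    have m: "{w\<in>S. Y w \<in> B} \<in> sets M" using that by measurable
    have "emeasure (N S c) B = emeasure (density M (\<lambda>w. ennreal (c * indicator S w))) (Y -` B \<inter> space M)"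
      unfolding N_def using that by (subst emeasure_distr) auto
    also have "\<dots> = (\<integral>\<^sup>+ w. ennreal (c * indicator S w) * indicator (Y -` B \<inter> space M) w \<partial>M)"
      using that by (subst emeasure_density) (auto simp: nn_integral_set_ennreal)
    also have "\<dots> = (\<integral>\<^sup>+ w. ennreal c * indicator {w\<in>S. Y w \<in> B} w \<partial>M)"
      using sub by (intro nn_integral_cong) (auto split: split_indicator)
    also have "\<dots> = ennreal c * emeasure M {w\<in>S. Y w \<in> B}"
      using m by (simp add: nn_integral_cmult_indicator)
    also have "\<dots> = ennreal (measure M {w\<in>S. Y w \<in> B} * c)"
      using that by (simp add: emeasure_eq_measure ennreal_mult' mult.commute)
    finally show ?thesis .
  qed
  have NN: "N S1 c1 = N S2 c2"
  proof (rule measure_eqI)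
    show "sets (N S1 c1) = sets (N S2 c2)" by (simp add: N_def)
    fix B assume "B \<in> sets (N S1 c1)"
    then have B: "B \<in> sets borel" by (simp add: N_def)
    show "emeasure (N S1 c1) B = emeasure (N S2 c2) B"
      using em[OF S1 B c1] em[OF S2 B c2] eq[OF B] by simp
  qed
  have int: "integral\<^sup>L (N S c) (\<lambda>t. t) = (\<integral>w. indicator S w * Y w \<partial>M) * c"
    if "S \<in> sets M" "c \<ge> 0" for S c
  proof -
    have "integral\<^sup>L (N S c) (\<lambda>t. t) = integral\<^sup>L (density M (\<lambda>w. ennreal (c * indicator S w))) Y"
      unfolding N_def by (subst integral_distr) auto
    also have "\<dots> = (\<integral>w. (c * indicator S w) * Y w \<partial>M)"
      using that by (subst integral_density) auto
    also have "\<dots> = (\<integral>w. indicator S w * Y w \<partial>M) * c"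
      by (simp add: mult_ac)
    finally show ?thesis .
  qed
  show ?thesis using int[OF S1 c1] int[OF S2 c2] NN by simp
qed

lemma msplit:
  assumes "finite_measure M" "{w\<in>space M. P w} \<in> sets M" "{w\<in>space M. Q w} \<in> sets M"
  shows "measure M {w\<in>space M. P w} = measure M {w\<in>space M. P w \<and> Q w} + measure M {w\<in>space M. P w \<and> \<not> Q w}"
proof -
  interpret finite_measure M by fact
  have "{w\<in>space M. P w \<and> Q w} \<in> sets M" "{w\<in>space M. P w \<and> \<not> Q w} \<in> sets M"
  proof -
    have "{w\<in>space M. P w \<and> Q w} = {w\<in>space M. P w} \<inter> {w\<in>space M. Q w}"
      "{w\<in>space M. P w \<and> \<not> Q w} = {w\<in>space M. P w} - {w\<in>space M. Q w}" by auto
    then show "{w\<in>space M. P w \<and> Q w} \<in> sets M" "{w\<in>space M. P w \<and> \<not> Q w} \<in> sets M"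
      using assms(2,3) by auto
  qed
  moreover have "{w\<in>space M. P w} = {w\<in>space M. P w \<and> Q w} \<union> {w\<in>space M. P w \<and> \<not> Q w}" by auto
  ultimately show ?thesis by (metis (no_types, lifting) finite_measure_Union disjoint_iff mem_Collect_eq)
qed

lemma isplit:
  fixes Y :: "'w \<Rightarrow> real"
  assumes "integrable M Y" "{w\<in>space M. P w} \<in> sets M" "{w\<in>space M. Q w} \<in> sets M"
  shows "(\<integral>w. indicator {w\<in>space M. P w} w * Y w \<partial>M) = (\<integral>w. indicator {w\<in>space M. P w \<and> Q w} w * Y w \<partial>M) + (\<integral>w. indicator {w\<in>space M. P w \<and> \<not> Q w} w * Y w \<partial>M)"
proof -
  have s1: "{w\<in>space M. P w \<and> Q w} \<in> sets M" "{w\<in>space M. P w \<and> \<not> Q w} \<in> sets M"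
  proof -
    have "{w\<in>space M. P w \<and> Q w} = {w\<in>space M. P w} \<inter> {w\<in>space M. Q w}"
      "{w\<in>space M. P w \<and> \<not> Q w} = {w\<in>space M. P w} - {w\<in>space M. Q w}" by auto
    then show "{w\<in>space M. P w \<and> Q w} \<in> sets M" "{w\<in>space M. P w \<and> \<not> Q w} \<in> sets M"
      using assms(2,3) by auto
  qed
  have i: "integrable M (\<lambda>w. indicator S w * Y w)" if "S \<in> sets M" for S
    using integrable_real_mult_indicator[OF that assms(1)] by (simp add: mult.commute)
  have "(\<integral>w. indicator {w\<in>space M. P w \<and> Q w} w * Y w \<partial>M) + (\<integral>w. indicator {w\<in>space M. P w \<and> \<not> Q w} w * Y w \<partial>M)
     = (\<integral>w. indicator {w\<in>space M. P w \<and> Q w} w * Y w + indicator {w\<in>space M. P w \<and> \<not> Q w} w * Y w \<partial>M)"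
    using i[OF s1(1)] i[OF s1(2)] by (simp add: Bochner_Integration.integral_add)
  also have "\<dots> = (\<integral>w. indicator {w\<in>space M. P w} w * Y w \<partial>M)"
    by (rule Bochner_Integration.integral_cong[OF refl]) (auto split: split_indicator)
  finally show ?thesis by simp
qed

lemma alg:
  fixes JT JF a b p1 p2 q1 q2 :: real
  assumes "a>0" "b>0" "p1>0" "p2>0" "q1>0" "q2>0" "p1+p2=1" "q1+q2=1"
  shows "(JT*p1 + JF*q1)/(a*p1 + b*q1) - (JT*p2 + JF*q2)/(a*p2+b*q2)
     = (JT/a - JF/b) * (a*b*(p1 - q1)/((a*p1+b*q1)*(a*p2+b*q2)))"
proof -
  have d1: "a*p1+b*q1 > 0" and d2: "a*p2+b*q2 > 0" using assms by (auto intro: add_pos_pos)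
  have p2: "p2 = 1 - p1" and q2: "q2 = 1 - q1" using assms by auto
  have "(JT*p1 + JF*q1)/(a*p1 + b*q1) - (JT*p2 + JF*q2)/(a*p2+b*q2)
     = ((JT*p1 + JF*q1)*(a*p2+b*q2) - (JT*p2 + JF*q2)*(a*p1 + b*q1)) / ((a*p1+b*q1)*(a*p2+b*q2))"
    using d1 d2 by (simp add: diff_frac_eq)
  also have "(JT*p1 + JF*q1)*(a*p2+b*q2) - (JT*p2 + JF*q2)*(a*p1 + b*q1) = (JT*b - JF*a)*(p1-q1)"
    unfolding p2 q2 by (simp add: algebra_simps)
  also have "JT*b - JF*a = (JT/a - JF/b) * (a*b)" using assms by (simp add: field_simps)
  finally show ?thesis by simp
qed

lemma signs:
  fixes dC dD k :: "bool \<Rightarrow> real"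
  assumes "\<And>x. dD x = dC x * k x" "(\<forall>x. k x > 0) \<or> (\<forall>x. k x < 0)"
    "(\<forall>x. dD x \<ge> 0) \<or> (\<forall>x. dD x \<le> 0)"
  shows "(\<forall>x. dC x \<ge> 0) \<or> (\<forall>x. dC x \<le> 0)"
  using assms by (smt (verit) mult_nonneg_nonpos mult_nonpos_nonpos mult_nonneg_nonneg mult_nonpos_nonneg zero_le_mult_iff mult_le_0_iff)

theorem theorem1:
  fixes M :: "'w measure" and A C D :: "'w \<Rightarrow> bool" and Y :: "'w \<Rightarrow> real"
  assumes "prob_space M"
    and "A \<in> measurable M (count_space UNIV)"
    and "C \<in> measurable M (count_space UNIV)"
    and "D \<in> measurable M (count_space UNIV)"
    and "Y \<in> borel_measurable M"
    and "integrable M Y"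
    \<comment> \<open>factorization p(C)p(D|C)p(A|C)p(Y|A,C), i.e. D independent of (A,Y) given C\<close>
    and "\<And>x y z B. B \<in> sets borel \<Longrightarrow>
           measure M {w \<in> space M. A w = x \<and> C w = y \<and> D w = z \<and> Y w \<in> B}
             * measure M {w \<in> space M. C w = y}
         = measure M {w \<in> space M. A w = x \<and> C w = y \<and> Y w \<in> B}
             * measure M {w \<in> space M. C w = y \<and> D w = z}"
    \<comment> \<open>C and D are dependent\<close>
    and "\<not> (\<forall>y z. measure M {w \<in> space M. C w = y \<and> D w = z}
                 = measure M {w \<in> space M. C w = y} * measure M {w \<in> space M. D w = z})"
    \<comment> \<open>positivity\<close>
    and "\<And>x y z. measure M {w \<in> space M. A w = x \<and> C w = y \<and> D w = z} > 0"
    and "monotone_in2 (cond_exp2 M Y A D)"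
  shows "monotone_in2 (cond_exp2 M Y A C)"
proof -
  note [measurable] = assms(2-5)
  interpret prob_space M by fact
  have fm: "finite_measure M" by unfold_locales
  define P where "P x y z = measure M {w\<in>space M. A w = x \<and> C w = y \<and> D w = z}" for x y z
  define Q where "Q x y = measure M {w\<in>space M. A w = x \<and> C w = y}" for x y
  define PC where "PC y = measure M {w\<in>space M. C w = y}" for y
  define PCD where "PCD y z = measure M {w\<in>space M. C w = y \<and> D w = z}" for y z
  define PD where "PD z = measure M {w\<in>space M. D w = z}" for z
  define I where "I x y z = (\<integral>w. indicator {w\<in>space M. A w = x \<and> C w = y \<and> D w = z} w * Y w \<partial>M)" for x y z
  define J where "J x y = (\<integral>w. indicator {w\<in>space M. A w = x \<and> C w = y} w * Y w \<partial>M)" for x y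
  have pos: "P x y z > 0" for x y z unfolding P_def by (rule assms(9))
  have Qpos: "Q x y > 0" for x y
  proof -
    have "P x y True \<le> Q x y" unfolding P_def Q_def
      by (intro finite_measure_mono) auto
    then show ?thesis using pos[of x y True] by linarith
  qed
  have PCDpos: "PCD y z > 0" for y z
  proof -
    have "P True y z \<le> PCD y z" unfolding P_def PCD_def
      by (intro finite_measure_mono) auto
    then show ?thesis using pos[of True y z] by linarith
  qed
  have PCpos: "PC y > 0" for y
  proof -
    have "PCD y True \<le> PC y" unfolding PC_def PCD_def
      by (intro finite_measure_mono) auto
    then show ?thesis using PCDpos[of y True] by linarith
  qed
  have K: "I x y z * PC y = J x y * PCD y z" for x y z
    unfolding I_def J_def
  proof (rule key[OF fm assms(5)])
    fix B :: "real set" assume B: "B \<in> sets borel"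
    have e1: "{w\<in>{w\<in>space M. A w = x \<and> C w = y \<and> D w = z}. Y w \<in> B} = {w \<in> space M. A w = x \<and> C w = y \<and> D w = z \<and> Y w \<in> B}" by auto
    have e2: "{w\<in>{w\<in>space M. A w = x \<and> C w = y}. Y w \<in> B} = {w \<in> space M. A w = x \<and> C w = y \<and> Y w \<in> B}" by auto
    show "measure M {w\<in>{w\<in>space M. A w = x \<and> C w = y \<and> D w = z}. Y w \<in> B} * PC y = measure M {w\<in>{w\<in>space M. A w = x \<and> C w = y}. Y w \<in> B} * PCD y z"
      unfolding e1 e2 PC_def PCD_def by (rule assms(7)[OF B])
  qed (use PCpos PCDpos in \<open>auto intro: less_imp_le\<close>)
  have Pm: "P x y z * PC y = Q x y * PCD y z" for x y z
    using assms(7)[of UNIV x y z] unfolding P_def Q_def PC_def PCD_def by simp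
  define r where "r y z = PCD y z / PC y" for y z
  have Ir: "I x y z = J x y * r y z" for x y z
    using K[of x y z] PCpos[of y] unfolding r_def by (simp add: field_simps)
  have Pr: "P x y z = Q x y * r y z" for x y z
    using Pm[of x y z] PCpos[of y] unfolding r_def by (simp add: field_simps)
  have rpos: "r y z > 0" for y z unfolding r_def using PCpos PCDpos by simp
  have PCsplit: "PC y = PCD y True + PCD y False" for y
    using msplit[OF fm, of "\<lambda>w. C w = y" "\<lambda>w. D w"] unfolding PC_def PCD_def by simp
  have rsum: "r y True + r y False = 1" for y
    using PCsplit[of y] PCpos[of y] unfolding r_def by (simp add: add_divide_distrib[symmetric])
  have PCsum: "PC True + PC False = 1"
    using msplit[OF fm, of "\<lambda>w. True" "\<lambda>w. C w"] unfolding PC_def by (simp add: prob_space)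
  have PDsplit: "PD z = PCD True z + PCD False z" for z
  proof -
    have "PD z = measure M {w\<in>space M. D w = z \<and> C w} + measure M {w\<in>space M. D w = z \<and> \<not> C w}"
      unfolding PD_def by (rule msplit[OF fm]) measurable
    also have "{w\<in>space M. D w = z \<and> C w} = {w\<in>space M. C w = True \<and> D w = z}" by auto
    also have "{w\<in>space M. D w = z \<and> \<not> C w} = {w\<in>space M. C w = False \<and> D w = z}" by auto
    finally show ?thesis unfolding PCD_def .
  qed
  have ADsplit: "measure M {w\<in>space M. A w = x \<and> D w = z} = P x True z + P x False z" for x z
  proof -
    have "measure M {w\<in>space M. A w = x \<and> D w = z} = measure M {w\<in>space M. (A w = x \<and> D w = z) \<and> C w} + measure M {w\<in>space M. (A w = x \<and> D w = z) \<and> \<not> C w}"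
      by (rule msplit[OF fm]) measurable
    also have "{w\<in>space M. (A w = x \<and> D w = z) \<and> C w} = {w\<in>space M. A w = x \<and> C w = True \<and> D w = z}" by auto
    also have "{w\<in>space M. (A w = x \<and> D w = z) \<and> \<not> C w} = {w\<in>space M. A w = x \<and> C w = False \<and> D w = z}" by auto
    finally show ?thesis unfolding P_def .
  qed
  have ADisplit: "(\<integral>w. indicator {w\<in>space M. A w = x \<and> D w = z} w * Y w \<partial>M) = I x True z + I x False z" for x z
  proof -
    have "(\<integral>w. indicator {w\<in>space M. A w = x \<and> D w = z} w * Y w \<partial>M) = (\<integral>w. indicator {w\<in>space M. (A w = x \<and> D w = z) \<and> C w} w * Y w \<partial>M) + (\<integral>w. indicator {w\<in>space M. (A w = x \<and> D w = z) \<and> \<not> C w} w * Y w \<partial>M)"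
      by (rule isplit[OF assms(6)]) measurable
    also have "{w\<in>space M. (A w = x \<and> D w = z) \<and> C w} = {w\<in>space M. A w = x \<and> C w = True \<and> D w = z}" by auto
    also have "{w\<in>space M. (A w = x \<and> D w = z) \<and> \<not> C w} = {w\<in>space M. A w = x \<and> C w = False \<and> D w = z}" by auto
    finally show ?thesis unfolding I_def .
  qed
  have ED: "cond_exp2 M Y A D x z = (J x True * r True z + J x False * r False z) / (Q x True * r True z + Q x False * r False z)" for x z
    unfolding cond_exp2_def cond_exp_event_def ADsplit ADisplit Ir Pr ..
  have EC: "cond_exp2 M Y A C x y = J x y / Q x y" for x y
    unfolding cond_exp2_def cond_exp_event_def J_def Q_def ..
  have dep: "r True True \<noteq> r False True"
  proof
    assume eq: "r True True = r False True"
    have rPC: "r y z * PC y = PCD y z" for y z unfolding r_def using PCpos[of y] by simp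
    have "PCD y z = PC y * PD z" for y z
    proof -
      have "PD True = r True True * PC True + r False True * PC False"
        using PDsplit[of True] rPC by simp
      then have "PD True = (PC True + PC False) * r True True" using eq by (simp add: algebra_simps)
      then have PDT: "PD True = r True True" by (metis PCsum mult_1)
      have "PD False = r True False * PC True + r False False * PC False"
        using PDsplit[of False] rPC by simp
      moreover have "r False False = r True False" using eq rsum[of True] rsum[of False] by linarith
      ultimately have "PD False = (PC True + PC False) * r True False" by (simp add: algebra_simps)
      then have PDF: "PD False = r True False" by (metis PCsum mult_1)
      have "PCD y z = r y z * PC y" unfolding r_def using PCpos[of y] by simp
      then show ?thesis using PDT PDF eq rsum[of True] rsum[of False]
        by (cases y; cases z) (auto simp: algebra_simps)
    qed
    then show False using assms(8) unfolding PCD_def PC_def PD_def by blast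
  qed
  define k where "k x = Q x True * Q x False * (r True True - r False True) /
      ((Q x True * r True True + Q x False * r False True) * (Q x True * r True False + Q x False * r False False))" for x
  have dD: "cond_exp2 M Y A D x True - cond_exp2 M Y A D x False = (cond_exp2 M Y A C x True - cond_exp2 M Y A C x False) * k x" for x
    unfolding ED EC k_def
    by (rule alg) (use Qpos rpos rsum in auto)
  have ksign: "(\<forall>x. k x > 0) \<or> (\<forall>x. k x < 0)"
  proof -
    have den: "(Q x True * r True True + Q x False * r False True) * (Q x True * r True False + Q x False * r False False) > 0" for x
      using Qpos rpos by (intro mult_pos_pos add_pos_pos) auto
    have qq: "Q x True * Q x False > 0" for x using Qpos by simp
    show ?thesis
    proof (cases "r True True > r False True")
      case True
      then show ?thesis using den qq unfolding k_def by (auto intro!: divide_pos_pos mult_pos_pos)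
    next
      case False
      then have "r True True - r False True < 0" using dep by simp
      then show ?thesis using den qq unfolding k_def
        by (auto intro!: divide_neg_pos simp: mult_pos_neg)
    qed
  qed
  have mD: "(\<forall>x. cond_exp2 M Y A D x True - cond_exp2 M Y A D x False \<ge> 0) \<or> (\<forall>x. cond_exp2 M Y A D x True - cond_exp2 M Y A D x False \<le> 0)"
    using assms(10) unfolding monotone_in2_def nondecreasing_in2_def nonincreasing_in2_def
    by (metis (full_types) diff_ge_0_iff_ge diff_le_0_iff_le)
  have "(\<forall>x. cond_exp2 M Y A C x True - cond_exp2 M Y A C x False \<ge> 0) \<or> (\<forall>x. cond_exp2 M Y A C x True - cond_exp2 M Y A C x False \<le> 0)"
    by (rule signs[OF dD ksign mD])
  then show ?thesis unfolding monotone_in2_def nondecreasing_in2_def nonincreasing_in2_def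
    by auto
qed

end
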